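(* Suppose that $$g[\![\rho]\!]p_1^2+\int_{p_1}^0\Big(\Gamma_{\mathrm{rel}}(p)^3+p^2\Gamma_{\mathrm{rel}}(p)\Big)dp<0 .$$ Then $\inf_{\lambda>0}\nu(\lambda)<-1$.
   Context: Constants $g>0$, $p_0<p_1<0$, $[\![\rho]\!]<0$ (density jump air minus water); $\Gamma_{\mathrm{rel}}:[p_1,0]\to(0,\infty)$ a given continuous function (prescribed relative circulation). For $\lambda>0$ let $a(p)=\Gamma_{\mathrm{rel}}(p)$ for $p_1<p<0$, $a(p)=\lambda$ for $p_0<p<p_1$; $\mathscr A=\{\varphi\in H^1((p_0,0)):\varphi(p_0)=\varphi(0)=0\}$; $\mathscr R(\varphi;\lambda)=\dfrac{g[\![\rho]\!]\varphi(p_1)^2+\int_{p_0}^0a^3\varphi_p^2\,dp}{\int_{p_0}^0a\varphi^2\,dp}$; $\nu(\lambda)=\inf_{\varphi\in\mathscr A,\varphi\not\equiv0}\mathscr R(\varphi;\lambda)$. *)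

theory Defs
  imports "HOL-Analysis.Analysis"
begin

text \<open>Coefficient a(p): Gamma_rel on the upper layer (p1,0), the constant lambda on (p0,p1).
  (Values at the single points p1, 0 are irrelevant: null sets.)\<close>
definition coef_a :: "(real \<Rightarrow> real) \<Rightarrow> real \<Rightarrow> real \<Rightarrow> real \<Rightarrow> real" where
  "coef_a Gam p1 lam p = (if p1 < p then Gam p else lam)"

text \<open>H^1((p0,0)) functions vanishing at both endpoints, represented by their continuous
  representative phi together with a weak derivative psi in L^2((p0,0)):
  phi(x) = integral of psi over [p0,x] (so phi(p0) = 0), and phi(0) = 0.\<close>
definition H10_pair :: "real \<Rightarrow> (real \<Rightarrow> real) \<Rightarrow> (real \<Rightarrow> real) \<Rightarrow> bool" where
  "H10_pair p0 phi psi \<longleftrightarrow>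
     psi \<in> borel_measurable lborel \<and>
     set_integrable lborel {p0..0} psi \<and>
     set_integrable lborel {p0..0} (\<lambda>p. (psi p)^2) \<and>
     (\<forall>x\<in>{p0..0}. phi x = (LINT t:{p0..x}|lborel. psi t)) \<and>
     phi 0 = 0"

definition rayleigh ::
  "real \<Rightarrow> real \<Rightarrow> (real \<Rightarrow> real) \<Rightarrow> real \<Rightarrow> real \<Rightarrow> real \<Rightarrow> (real \<Rightarrow> real) \<Rightarrow> (real \<Rightarrow> real) \<Rightarrow> real" where
  "rayleigh g rho Gam p0 p1 lam phi psi =
     (g * rho * (phi p1)^2 + (LINT p:{p0..0}|lborel. (coef_a Gam p1 lam p)^3 * (psi p)^2))
     / (LINT p:{p0..0}|lborel. coef_a Gam p1 lam p * (phi p)^2)"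

definition nu :: "real \<Rightarrow> real \<Rightarrow> (real \<Rightarrow> real) \<Rightarrow> real \<Rightarrow> real \<Rightarrow> real \<Rightarrow> real" where
  "nu g rho Gam p0 p1 lam =
     Inf {rayleigh g rho Gam p0 p1 lam phi psi | phi psi.
            H10_pair p0 phi psi \<and> (\<exists>p\<in>{p0..0}. phi p \<noteq> 0)}"

end

theory Submission imports Defs begin

lemma set_int_nonneg:
  fixes f :: "'a \<Rightarrow> real"
  assumes "\<And>x. x \<in> A \<Longrightarrow> 0 \<le> f x"
  shows "0 \<le> (LINT x:A|M. f x)"
  unfolding set_lebesgue_integral_def
  by (intro integral_nonneg_AE) (auto simp: assms indicator_def)

lemma set_int_subset_mono:
  fixes f :: "'a \<Rightarrow> real"
  assumes "set_integrable M B f" "A \<in> sets M" "A \<subseteq> B" "\<And>x. x \<in> B \<Longrightarrow> 0 \<le> f x"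
  shows "(LINT x:A|M. f x) \<le> (LINT x:B|M. f x)"
proof -
  have iA: "set_integrable M A f" using set_integrable_subset assms(1-3) by blast
  show ?thesis unfolding set_lebesgue_integral_def
    apply (rule integral_mono)
    using iA assms(1) unfolding set_integrable_def apply auto
    using assms(3,4) by (auto simp: indicator_def)
qed

lemma set_int_abs_le:
  fixes f g :: "real \<Rightarrow> real"
  assumes "set_integrable M A f" "set_integrable M A g" "\<And>x. x \<in> A \<Longrightarrow> \<bar>f x\<bar> \<le> g x"
  shows "\<bar>LINT x:A|M. f x\<bar> \<le> (LINT x:A|M. g x)"
  unfolding set_lebesgue_integral_def
  apply (rule integral_abs_bound_integral)
  using assms unfolding set_integrable_def by (auto simp: indicator_def)

lemma cs_int:
  fixes f :: "real \<Rightarrow> real"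
  assumes i1: "set_integrable lborel A f" and i2: "set_integrable lborel A (\<lambda>x. (f x)^2)"
    and A: "A \<in> sets lborel" "emeasure lborel A \<noteq> \<infinity>" and L: "measure lborel A > 0"
  shows "(LINT x:A|lborel. f x)^2 \<le> measure lborel A * (LINT x:A|lborel. (f x)^2)"
proof -
  define I where "I = (LINT x:A|lborel. f x)"
  define Q where "Q = (LINT x:A|lborel. (f x)^2)"
  define L where "L = measure lborel A"
  have Q0: "Q \<ge> 0" unfolding Q_def by (rule set_int_nonneg) simp
  have key: "2 * \<bar>I\<bar> \<le> t * Q + L / t" if t: "t > 0" for t
  proof -
    have ic: "set_integrable lborel A (\<lambda>x. 1 / t)"
      using A unfolding set_integrable_def
      by (simp, intro integrable_divide_zero integrable_real_indicator) (auto simp: top.not_eq_extremum)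
    have ig: "set_integrable lborel A (\<lambda>x. t * (f x)^2 + 1 / t)"
      using i2 ic by auto
    have pw: "\<bar>2 * f x\<bar> \<le> t * (f x)^2 + 1 / t" for x
    proof -
      have "0 \<le> (t * \<bar>f x\<bar> - 1)^2" by simp
      hence "2 * t * \<bar>f x\<bar> \<le> t * (t * (f x)^2) + 1"
        by (simp add: power2_eq_square algebra_simps abs_mult_self_eq)
      hence "t * (2 * \<bar>f x\<bar>) \<le> t * (t * (f x)^2 + 1 / t)"
        using t by (simp add: algebra_simps)
      thus ?thesis using t by (simp add: abs_mult)
    qed
    have "\<bar>LINT x:A|lborel. 2 * f x\<bar> \<le> (LINT x:A|lborel. t * (f x)^2 + 1 / t)"
      by (rule set_int_abs_le) (use i1 ig pw in auto)
    also have "\<dots> = t * Q + L / t"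
      using i2 ic A by (simp add: Q_def L_def set_integral_const)
    finally show ?thesis by (simp add: I_def abs_mult)
  qed
  show ?thesis
  proof (cases "I = 0")
    case True thus ?thesis using Q0 L by (simp add: I_def Q_def)
  next
    case False
    hence Ip: "\<bar>I\<bar> > 0" by simp
    have "2 * \<bar>I\<bar> \<le> (L / \<bar>I\<bar>) * Q + L / (L / \<bar>I\<bar>)"
      using key[of "L / \<bar>I\<bar>"] Ip L by (simp add: L_def)
    also have "L / (L / \<bar>I\<bar>) = \<bar>I\<bar>" using L Ip by (simp add: L_def)
    finally have "\<bar>I\<bar> \<le> L * Q / \<bar>I\<bar>" by simp
    hence "\<bar>I\<bar> * \<bar>I\<bar> \<le> L * Q" using Ip by (simp add: field_simps)
    thus ?thesis by (simp add: I_def L_def Q_def power2_eq_square abs_mult_self_eq)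
  qed
qed


lemma coef_pos:
  assumes "\<And>p. p \<in> {p1..0} \<Longrightarrow> Gam p > 0" "lam > 0" "p \<le> 0"
  shows "coef_a Gam p1 lam p > 0"
  using assms by (auto simp: coef_a_def)

lemma coef_int:
  fixes Gam psi :: "real \<Rightarrow> real"
  assumes cont: "continuous_on {p1..0} Gam" and lam: "lam > 0" and pp: "p0 < p1" "p1 < 0"
    and psim: "psi \<in> borel_measurable lborel"
    and i2: "set_integrable lborel {p0..0} (\<lambda>p. (psi p)^2)"
  shows "set_integrable lborel {p0..0} (\<lambda>p. (coef_a Gam p1 lam p)^3 * (psi p)^2)"
proof -
  have "compact (Gam ` {p1..0})" by (rule compact_continuous_image[OF cont]) simp
  then obtain B where B: "B > 0" "\<And>p. p \<in> {p1..0} \<Longrightarrow> norm (Gam p) \<le> B"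
    using compact_imp_bounded bounded_pos by (metis image_eqI)
  define M where "M = max lam B"
  have Mp: "M > 0" using lam by (simp add: M_def)
  have ab: "\<bar>coef_a Gam p1 lam p\<bar> \<le> M" if "p \<in> {p0..0}" for p
    using that B(2)[of p] lam by (auto simp: coef_a_def M_def)
  have "(\<lambda>x. indicator {p1<..0} x *\<^sub>R (Gam x)^3) \<in> borel_measurable borel"
    by (rule borel_measurable_continuous_on_indicator)
       (auto intro!: continuous_intros continuous_on_subset[OF cont])
  hence mG: "(\<lambda>x. indicator {p1<..0} x *\<^sub>R (Gam x)^3) \<in> borel_measurable lborel" by simp
  have eq: "(\<lambda>x. indicator {p0..0} x *\<^sub>R ((coef_a Gam p1 lam x)^3 * (psi x)^2)) =
      (\<lambda>x. (indicator {p0..p1} x * lam^3 + indicator {p1<..0} x *\<^sub>R (Gam x)^3) * (psi x)^2)"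
    using assms by (auto simp: fun_eq_iff indicator_def coef_a_def)
  have meas: "set_borel_measurable lborel {p0..0} (\<lambda>p. (coef_a Gam p1 lam p)^3 * (psi p)^2)"
    unfolding set_borel_measurable_def eq using mG psim by measurable
  show ?thesis
  proof (rule set_integrable_bound[OF _ meas])
    show "set_integrable lborel {p0..0} (\<lambda>p. M^3 * (psi p)^2)" using i2 by simp
    show "AE x in lborel. x \<in> {p0..0} \<longrightarrow> norm ((coef_a Gam p1 lam x)^3 * (psi x)^2) \<le> norm (M^3 * (psi x)^2)"
    proof (rule AE_I2, rule impI)
      fix x assume x: "x \<in> {p0..0}"
      have "\<bar>coef_a Gam p1 lam x\<bar>^3 \<le> M^3" using ab[OF x] by (intro power_mono) auto
      thus "norm ((coef_a Gam p1 lam x)^3 * (psi x)^2) \<le> norm (M^3 * (psi x)^2)"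
        using Mp by (simp add: abs_mult power_abs mult_right_mono)
    qed
  qed
qed


lemma lower_bound:
  fixes g rho p0 p1 lam :: real and Gam :: "real \<Rightarrow> real"
  assumes "g > 0" and pp: "p0 < p1" "p1 < 0" and "rho < 0"
    and cont: "continuous_on {p1..0} Gam" and Gp: "\<And>p. p \<in> {p1..0} \<Longrightarrow> Gam p > 0"
    and lam: "lam > 0"
  shows "\<exists>K. \<forall>phi psi. H10_pair p0 phi psi \<longrightarrow> K \<le> rayleigh g rho Gam p0 p1 lam phi psi"
proof -
  define c where "c = - (g * rho)"
  have c: "c > 0" using assms by (simp add: c_def mult_pos_neg)
  define d where "d = min (p1 - p0) (lam^3 / (2*c))"
  have d: "d > 0" "d \<le> p1 - p0" "2 * c * d \<le> lam^3"
    using c lam pp by (auto simp: d_def field_simps min_def)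
  define K where "K = - (2 * c / (d * lam))"
  have K: "K < 0" using c d lam by (simp add: K_def)
  define J where "J = {p1 - d..p1}"
  have J: "J \<subseteq> {p0..0}" "J \<subseteq> {p0..p1}" using d pp by (auto simp: J_def)
  let ?a = "coef_a Gam p1 lam"
  have aJ: "?a p = lam" if "p \<in> J" for p using that by (auto simp: J_def coef_a_def)
  have apos: "?a p > 0" if "p \<in> {p0..0}" for p using coef_pos[OF Gp lam] that by auto
  show ?thesis
  proof (rule exI[of _ K], intro allI impI)
    fix phi psi assume H: "H10_pair p0 phi psi"
    have psim: "psi \<in> borel_measurable lborel" and i1: "set_integrable lborel {p0..0} psi"
      and i2: "set_integrable lborel {p0..0} (\<lambda>p. (psi p)^2)"
      and phid: "\<And>x. x \<in> {p0..0} \<Longrightarrow> phi x = (LINT t:{p0..x}|lborel. psi t)"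
      using H by (auto simp: H10_pair_def)
    define N where "N = g * rho * (phi p1)^2 + (LINT p:{p0..0}|lborel. (?a p)^3 * (psi p)^2)"
    define T where "T = (LINT p:{p0..0}|lborel. (?a p)^3 * (psi p)^2)"
    define D where "D = (LINT p:{p0..0}|lborel. ?a p * (phi p)^2)"
    have R: "rayleigh g rho Gam p0 p1 lam phi psi = N / D"
      by (simp add: rayleigh_def N_def D_def)
    show "K \<le> rayleigh g rho Gam p0 p1 lam phi psi"
    proof (cases "set_integrable lborel {p0..0} (\<lambda>p. ?a p * (phi p)^2)")
      case False
      hence "D = 0" unfolding D_def set_lebesgue_integral_def set_integrable_def
        by (rule not_integrable_integral_eq)
      thus ?thesis using R K by simp
    next
      case iD: True
      have aD0: "0 \<le> ?a p * (phi p)^2" if "p \<in> {p0..0}" for p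
        using apos[OF that] by simp
      have aT0: "0 \<le> (?a p)^3 * (psi p)^2" if "p \<in> {p0..0}" for p
        using apos[OF that] by simp
      have D0: "D \<ge> 0" unfolding D_def by (rule set_int_nonneg) (use aD0 in auto)
      have iT: "set_integrable lborel {p0..0} (\<lambda>p. (?a p)^3 * (psi p)^2)"
        by (rule coef_int[OF cont lam pp psim i2])
      have "set_integrable lborel J (\<lambda>p. ?a p * (phi p)^2)"
        by (rule set_integrable_subset[OF iD]) (use J in \<open>auto simp: J_def\<close>)
      hence "set_integrable lborel J (\<lambda>p. lam * (phi p)^2)"
        by (subst set_integrable_cong[OF refl refl, of _ _ "\<lambda>p. ?a p * (phi p)^2"]) (auto simp: aJ)
      hence iPJ: "set_integrable lborel J (\<lambda>p. (phi p)^2)" using lam by simp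
      have iSJ: "set_integrable lborel J (\<lambda>p. (psi p)^2)"
        by (rule set_integrable_subset[OF i2]) (use J in \<open>auto simp: J_def\<close>)
      define S where "S = (LINT p:J|lborel. (psi p)^2)"
      define P where "P = (LINT p:J|lborel. (phi p)^2)"
      have S0: "S \<ge> 0" unfolding S_def by (rule set_int_nonneg) simp
      have TS: "T \<ge> lam^3 * S"
      proof -
        have "(LINT p:J|lborel. (?a p)^3 * (psi p)^2) \<le> T"
          unfolding T_def by (rule set_int_subset_mono[OF iT]) (use J aT0 in \<open>auto simp: J_def\<close>)
        moreover have "(LINT p:J|lborel. (?a p)^3 * (psi p)^2) = (LINT p:J|lborel. lam^3 * (psi p)^2)"
          by (rule set_lebesgue_integral_cong) (auto simp: aJ J_def)
        ultimately show ?thesis by (simp add: S_def)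
      qed
      have DP: "D \<ge> lam * P"
      proof -
        have "(LINT p:J|lborel. ?a p * (phi p)^2) \<le> D"
          unfolding D_def by (rule set_int_subset_mono[OF iD]) (use J aD0 in \<open>auto simp: J_def\<close>)
        moreover have "(LINT p:J|lborel. ?a p * (phi p)^2) = (LINT p:J|lborel. lam * (phi p)^2)"
          by (rule set_lebesgue_integral_cong) (auto simp: aJ J_def)
        ultimately show ?thesis by (simp add: P_def)
      qed
      have pw: "(phi p1)^2 / 2 - d * S \<le> (phi x)^2" if x: "x \<in> J" for x
      proof (cases "x = p1")
        case True
        have "0 \<le> d * S" using S0 d by simp
        moreover have "0 \<le> (phi p1)^2" by simp
        ultimately show ?thesis unfolding True by linarith
      next
        case False
        hence xl: "x < p1" "p1 - x \<le> d" "p0 \<le> x" using x J by (auto simp: J_def)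
        have un: "{p0..p1} = {p0..x} \<union> {x<..p1}" using xl by auto
        have i1a: "set_integrable lborel {p0..x} psi" by (rule set_integrable_subset[OF i1]) (use xl pp in auto)
        have i1b: "set_integrable lborel {x<..p1} psi" by (rule set_integrable_subset[OF i1]) (use xl pp in auto)
        have i2b: "set_integrable lborel {x<..p1} (\<lambda>p. (psi p)^2)" by (rule set_integrable_subset[OF i2]) (use xl pp in auto)
        define I where "I = (LINT t:{x<..p1}|lborel. psi t)"
        have "phi p1 = (LINT t:{p0..p1}|lborel. psi t)" using phid[of p1] pp by auto
        also have "\<dots> = phi x + I" unfolding un I_def
          by (subst set_integral_Un) (use i1a i1b phid[of x] xl pp in auto)
        finally have e: "phi p1 = phi x + I" .
        have "I^2 \<le> measure lborel {x<..p1} * (LINT t:{x<..p1}|lborel. (psi t)^2)"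
          unfolding I_def by (rule cs_int[OF i1b i2b]) (use xl in \<open>auto simp: emeasure_lborel_Ioc\<close>)
        also have "\<dots> \<le> d * S"
        proof (rule mult_mono)
          show "measure lborel {x<..p1} \<le> d" using xl by simp
          show "(LINT t:{x<..p1}|lborel. (psi t)^2) \<le> S" unfolding S_def
            by (rule set_int_subset_mono[OF iSJ]) (use xl in \<open>auto simp: J_def\<close>)
          show "0 \<le> d" using d by simp
          show "0 \<le> (LINT t:{x<..p1}|lborel. (psi t)^2)" by (rule set_int_nonneg) simp
        qed
        finally have "I^2 \<le> d * S" .
        moreover have "(phi x + I)^2 \<le> 2 * (phi x)^2 + 2 * I^2"
        proof -
          have h: "0 \<le> (phi x - I)^2" by simp
          thus ?thesis unfolding power2_sum power2_diff by linarith
        qed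
        ultimately show ?thesis using e by simp
      qed
      have iC: "set_integrable lborel J (\<lambda>p. (phi p1)^2 / 2 - d * S)"
        unfolding J_def by (rule borel_integrable_atLeastAtMost') simp
      have "(LINT p:J|lborel. (phi p1)^2 / 2 - d * S) \<le> P"
        unfolding P_def by (rule set_integral_mono[OF iC iPJ pw])
      moreover have "(LINT p:J|lborel. (phi p1)^2 / 2 - d * S) = d * ((phi p1)^2 / 2 - d * S)"
        using d by (simp add: J_def set_integral_const)
      ultimately have ph: "d * ((phi p1)^2 / 2 - d * S) \<le> P" by simp
      hence ph2: "(phi p1)^2 \<le> 2 * d * S + 2 * P / d" using d by (simp add: field_simps)
      have "N = T - c * (phi p1)^2" by (simp add: N_def T_def c_def)
      also have "\<dots> \<ge> lam^3 * S - c * (2 * d * S + 2 * P / d)"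
        using TS ph2 c by (smt (verit) mult_left_mono)
      finally have "N \<ge> lam^3 * S - c * (2 * d * S + 2 * P / d)" .
      moreover have "lam^3 * S - c * (2 * d * S + 2 * P / d) \<ge> - (2 * c * P / d)"
      proof -
        have "2 * c * d * S \<le> lam^3 * S" using d(3) S0 by (rule mult_right_mono)
        moreover have "c * (2 * d * S + 2 * P / d) = 2 * c * d * S + 2 * c * P / d"
          by (simp add: algebra_simps)
        ultimately show ?thesis by linarith
      qed
      moreover have "- (2 * c * P / d) \<ge> K * D"
      proof -
        have "2 * c * P / d \<le> 2 * c * (D / lam) / d"
          using DP lam c d by (intro divide_right_mono mult_left_mono) (auto simp: field_simps)
        thus ?thesis using lam d by (simp add: K_def field_simps)
      qed
      ultimately have ND: "N \<ge> K * D" by linarith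
      show ?thesis
      proof (cases "D = 0")
        case True thus ?thesis using R K by simp
      next
        case False hence "D > 0" using D0 by simp
        thus ?thesis using R ND by (simp add: pos_le_divide_eq)
      qed
    qed
  qed
qed


lemma open_left:
  fixes f :: "real \<Rightarrow> real"
  assumes "continuous_on {a..b} f" "a \<le> b"
  shows "(LINT x:{a<..b}|lborel. f x) = (LINT x:{a..b}|lborel. f x)"
proof -
  have i: "set_integrable lborel {a..b} f" by (rule borel_integrable_atLeastAtMost'[OF assms(1)])
  have i1: "set_integrable lborel {a} f" by (rule set_integrable_subset[OF i]) (use assms in auto)
  have i2: "set_integrable lborel {a<..b} f" by (rule set_integrable_subset[OF i]) auto
  have u: "{a..b} = {a} \<union> {a<..b}" using assms by auto
  have z: "(LINT x:{a}|lborel. f x) = 0"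
  proof -
    have "(LINT x:{a}|lborel. f x) = (LINT x:{a}|lborel. f a)"
      by (rule set_lebesgue_integral_cong) auto
    also have "\<dots> = 0" by (simp add: set_integral_const measure_def)
    finally show ?thesis .
  qed
  show ?thesis unfolding u by (subst set_integral_Un) (use i1 i2 z in auto)
qed

lemma test_fun:
  fixes p0 p1 k :: real
  assumes pp: "p0 < p1" "p1 < 0" and k: "k > 0" "k * (p1 - p0) = - p1"
  shows "H10_pair p0 (\<lambda>p. if p \<le> p1 then k * (p - p0) else - p) (\<lambda>p. if p \<le> p1 then k else -1)"
proof -
  let ?psi = "\<lambda>p::real. if p \<le> p1 then k else -1"
  have m: "?psi \<in> borel_measurable lborel" by measurable
  have sm: "set_borel_measurable lborel {p0..0} ?psi" unfolding set_borel_measurable_def by measurable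
  have sm2: "set_borel_measurable lborel {p0..0} (\<lambda>p. (?psi p)^2)" unfolding set_borel_measurable_def by measurable
  have c1: "set_integrable lborel {p0..0} (\<lambda>_. k + 1)" by (rule borel_integrable_atLeastAtMost') simp
  have c2: "set_integrable lborel {p0..0} (\<lambda>_. (k + 1)^2)" by (rule borel_integrable_atLeastAtMost') simp
  have i1: "set_integrable lborel {p0..0} ?psi"
    by (rule set_integrable_bound[OF c1 sm]) (use k in auto)
  have i2: "set_integrable lborel {p0..0} (\<lambda>p. (?psi p)^2)"
    by (rule set_integrable_bound[OF c2 sm2]) (use k in \<open>auto simp: power_mono\<close>)
  have phi: "(if x \<le> p1 then k * (x - p0) else - x) = (LINT t:{p0..x}|lborel. ?psi t)" if x: "x \<in> {p0..0}" for x
  proof (cases "x \<le> p1")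
    case True
    have "(LINT t:{p0..x}|lborel. ?psi t) = (LINT t:{p0..x}|lborel. k)"
      by (rule set_lebesgue_integral_cong) (use True in auto)
    also have "\<dots> = (x - p0) * k" using x by (simp add: set_integral_const)
    finally show ?thesis using True by simp
  next
    case False
    have u: "{p0..x} = {p0..p1} \<union> {p1<..x}" using False pp by auto
    have ia: "set_integrable lborel {p0..p1} ?psi" by (rule set_integrable_subset[OF i1]) (use pp in auto)
    have ib: "set_integrable lborel {p1<..x} ?psi" by (rule set_integrable_subset[OF i1]) (use pp x in auto)
    have "(LINT t:{p0..x}|lborel. ?psi t) = (LINT t:{p0..p1}|lborel. ?psi t) + (LINT t:{p1<..x}|lborel. ?psi t)"
      unfolding u by (rule set_integral_Un) (use ia ib in auto)
    also have "(LINT t:{p0..p1}|lborel. ?psi t) = (LINT t:{p0..p1}|lborel. k)"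
      by (rule set_lebesgue_integral_cong) auto
    also have "\<dots> = (p1 - p0) * k" using pp by (simp add: set_integral_const)
    also have "(LINT t:{p1<..x}|lborel. ?psi t) = (LINT t:{p1<..x}|lborel. -1)"
      by (rule set_lebesgue_integral_cong) auto
    also have "\<dots> = - (x - p1)" using False by (simp add: set_integral_const)
    finally show ?thesis using False k by (simp add: algebra_simps)
  qed
  show ?thesis unfolding H10_pair_def using m i1 i2 phi pp by auto
qed


theorem lemma4p6:
  fixes g rho p0 p1 :: real and Gam :: "real \<Rightarrow> real"
  assumes "g > 0" and "p0 < p1" and "p1 < 0" and "rho < 0"
    and "continuous_on {p1..0} Gam" and "\<And>p. p \<in> {p1..0} \<Longrightarrow> Gam p > 0"
    and "g * rho * p1^2 + (LINT p:{p1..0}|lborel. (Gam p)^3 + p^2 * Gam p) < 0"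
  shows "\<exists>lam>0. nu g rho Gam p0 p1 lam < -1"
proof -
  note pp = assms(2,3) and cont = assms(5) and Gp = assms(6)
  have c3: "continuous_on {p1..0} (\<lambda>p. (Gam p)^3)" by (intro continuous_intros cont)
  have c1: "continuous_on {p1..0} (\<lambda>p. p^2 * Gam p)" by (intro continuous_intros cont)
  have iG3: "set_integrable lborel {p1..0} (\<lambda>p. (Gam p)^3)" by (rule borel_integrable_atLeastAtMost'[OF c3])
  have iG1: "set_integrable lborel {p1..0} (\<lambda>p. p^2 * Gam p)" by (rule borel_integrable_atLeastAtMost'[OF c1])
  define G3 where "G3 = (LINT p:{p1..0}|lborel. (Gam p)^3)"
  define G1 where "G1 = (LINT p:{p1..0}|lborel. p^2 * Gam p)"
  have G1pos: "G1 \<ge> 0" unfolding G1_def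
  proof (rule set_int_nonneg)
    fix p :: real assume "p \<in> {p1..0}"
    hence "Gam p > 0" by (rule Gp)
    thus "0 \<le> p^2 * Gam p" by simp
  qed
  define E where "E = - (g * rho * p1^2 + G3 + G1)"
  have E: "E > 0" using assms(7) iG3 iG1 by (simp add: E_def G3_def G1_def)
  define k where "k = - p1 / (p1 - p0)"
  have k: "k > 0" "k * (p1 - p0) = - p1" using pp by (auto simp: k_def divide_neg_pos)
  define \<alpha> where "\<alpha> = k^2 * (p1 - p0)"
  define \<beta> where "\<beta> = k^2 * (p1 - p0)^3 / 3"
  have ab: "\<alpha> > 0" "\<beta> > 0" using k pp by (auto simp: \<alpha>_def \<beta>_def)
  define lam where "lam = min 1 (E / (2 * (\<alpha> + \<beta>)))"
  have lam: "lam > 0" "lam \<le> 1" "lam * (\<alpha> + \<beta>) \<le> E / 2"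
  proof -
    have s: "\<alpha> + \<beta> > 0" using ab by simp
    have "lam \<le> E / (2 * (\<alpha> + \<beta>))" by (simp add: lam_def)
    hence "lam * (\<alpha> + \<beta>) \<le> E / (2 * (\<alpha> + \<beta>)) * (\<alpha> + \<beta>)"
      using s by (intro mult_right_mono) auto
    also have "\<dots> = E / 2" using s by (simp add: field_simps)
    finally have "lam * (\<alpha> + \<beta>) \<le> E / 2" .
    moreover have "lam > 0" using E s by (auto simp: lam_def)
    moreover have "lam \<le> 1" by (simp add: lam_def)
    ultimately show "lam > 0" "lam \<le> 1" "lam * (\<alpha> + \<beta>) \<le> E / 2" by auto
  qed
  define phi where "phi = (\<lambda>p::real. if p \<le> p1 then k * (p - p0) else - p)"
  define psi where "psi = (\<lambda>p::real. if p \<le> p1 then k else -1)"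
  have H: "H10_pair p0 phi psi" unfolding phi_def psi_def by (rule test_fun[OF pp k])
  let ?a = "coef_a Gam p1 lam"
  have u: "{p0..0} = {p0..p1} \<union> {p1<..0}" using pp by auto
  have dj: "{p0..p1} \<inter> {p1<..0} = {}" by auto
  have T: "(LINT p:{p0..0}|lborel. (?a p)^3 * (psi p)^2) = lam^3 * \<alpha> + G3"
  proof -
    have e1: "(LINT p:{p0..p1}|lborel. (?a p)^3 * (psi p)^2) = (LINT p:{p0..p1}|lborel. lam^3 * k^2)"
      by (rule set_lebesgue_integral_cong) (auto simp: coef_a_def psi_def)
    have e2: "(LINT p:{p1<..0}|lborel. (?a p)^3 * (psi p)^2) = (LINT p:{p1<..0}|lborel. (Gam p)^3)"
      by (rule set_lebesgue_integral_cong) (auto simp: coef_a_def psi_def)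
    have i1: "set_integrable lborel {p0..p1} (\<lambda>p. (?a p)^3 * (psi p)^2)"
      by (subst set_integrable_cong[OF refl refl, of _ _ "\<lambda>_. lam^3 * k^2"])
         (auto simp: coef_a_def psi_def intro!: borel_integrable_atLeastAtMost')
    have i2: "set_integrable lborel {p1<..0} (\<lambda>p. (?a p)^3 * (psi p)^2)"
      by (subst set_integrable_cong[OF refl refl, of _ _ "\<lambda>p. (Gam p)^3"])
         (auto simp: coef_a_def psi_def intro!: set_integrable_subset[OF iG3])
    have "(LINT p:{p0..0}|lborel. (?a p)^3 * (psi p)^2) =
        (LINT p:{p0..p1}|lborel. (?a p)^3 * (psi p)^2) + (LINT p:{p1<..0}|lborel. (?a p)^3 * (psi p)^2)"
      unfolding u by (rule set_integral_Un[OF dj i1 i2])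
    also have "\<dots> = lam^3 * \<alpha> + G3"
      unfolding e1 e2 G3_def using open_left[OF c3] pp
      by (simp add: set_integral_const \<alpha>_def)
    finally show ?thesis .
  qed
  have D: "(LINT p:{p0..0}|lborel. ?a p * (phi p)^2) = lam * \<beta> + G1"
  proof -
    have cq: "continuous_on {p0..p1} (\<lambda>p. lam * (k * (p - p0))^2)" by (intro continuous_intros)
    have e1: "(LINT p:{p0..p1}|lborel. ?a p * (phi p)^2) = (LINT p:{p0..p1}|lborel. lam * (k * (p - p0))^2)"
      by (rule set_lebesgue_integral_cong) (auto simp: coef_a_def phi_def)
    have e2: "(LINT p:{p1<..0}|lborel. ?a p * (phi p)^2) = (LINT p:{p1<..0}|lborel. p^2 * Gam p)"
      by (rule set_lebesgue_integral_cong) (auto simp: coef_a_def phi_def)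
    have i1: "set_integrable lborel {p0..p1} (\<lambda>p. ?a p * (phi p)^2)"
      by (subst set_integrable_cong[OF refl refl, of _ _ "\<lambda>p. lam * (k * (p - p0))^2"])
         (auto simp: coef_a_def phi_def intro!: borel_integrable_atLeastAtMost'[OF cq])
    have i2: "set_integrable lborel {p1<..0} (\<lambda>p. ?a p * (phi p)^2)"
      by (subst set_integrable_cong[OF refl refl, of _ _ "\<lambda>p. p^2 * Gam p"])
         (auto simp: coef_a_def phi_def intro!: set_integrable_subset[OF iG1])
    have ftc: "(LINT p:{p0..p1}|lborel. lam * (k * (p - p0))^2) = lam * k^2 * (p1 - p0)^3 / 3 - 0"
    proof -
      have "(LINT p:{p0..p1}|lborel. lam * (k * (p - p0))^2)
          = (\<lambda>p. lam * k^2 * (p - p0)^3 / 3) p1 - (\<lambda>p. lam * k^2 * (p - p0)^3 / 3) p0"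
        unfolding set_lebesgue_integral_def
      proof (rule integral_FTC_atLeastAtMost[OF _ _ cq])
        show "p0 \<le> p1" using pp by simp
        fix x
        show "((\<lambda>p. lam * k^2 * (p - p0)^3 / 3) has_vector_derivative lam * (k * (x - p0))^2) (at x within {p0..p1})"
          unfolding has_real_derivative_iff_has_vector_derivative[symmetric]
          apply (rule derivative_eq_intros refl | simp)+
          apply (simp add: power2_eq_square field_simps)
          done
      qed
      thus ?thesis by simp
    qed
    have "(LINT p:{p0..0}|lborel. ?a p * (phi p)^2) =
        (LINT p:{p0..p1}|lborel. ?a p * (phi p)^2) + (LINT p:{p1<..0}|lborel. ?a p * (phi p)^2)"
      unfolding u by (rule set_integral_Un[OF dj i1 i2])
    also have "\<dots> = lam * \<beta> + G1"
      unfolding e1 e2 G1_def ftc using open_left[OF c1] pp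
      by (simp add: \<beta>_def)
    finally show ?thesis .
  qed
  have phi1: "(phi p1)^2 = p1^2" using k by (simp add: phi_def)
  define N where "N = g * rho * p1^2 + (lam^3 * \<alpha> + G3)"
  define Dv where "Dv = lam * \<beta> + G1"
  have R: "rayleigh g rho Gam p0 p1 lam phi psi = N / Dv"
    unfolding rayleigh_def T D phi1 N_def Dv_def ..
  have "lam * \<beta> > 0" using lam ab by simp
  hence Dp: "Dv > 0" using G1pos by (simp add: Dv_def)
  have l3: "lam^3 \<le> lam"
  proof -
    have "lam^3 = lam * lam^2" by (simp add: power3_eq_cube power2_eq_square)
    also have "\<dots> \<le> lam * 1" using lam by (intro mult_left_mono) (auto simp: power_le_one)
    finally show ?thesis by simp
  qed
  have "lam^3 * \<alpha> \<le> lam * \<alpha>" using l3 ab by (intro mult_right_mono) auto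
  hence "N + Dv < 0" using lam E by (simp add: N_def Dv_def E_def algebra_simps)
  hence Rl: "rayleigh g rho Gam p0 p1 lam phi psi < -1" using Dp R by (simp add: divide_less_eq)
  obtain K where K: "\<forall>phi psi. H10_pair p0 phi psi \<longrightarrow> K \<le> rayleigh g rho Gam p0 p1 lam phi psi"
    using lower_bound[OF assms(1-6) lam(1)] by blast
  have mem: "rayleigh g rho Gam p0 p1 lam phi psi \<in> {rayleigh g rho Gam p0 p1 lam phi psi | phi psi.
            H10_pair p0 phi psi \<and> (\<exists>p\<in>{p0..0}. phi p \<noteq> 0)}"
  proof -
    have "p1 \<in> {p0..0}" "phi p1 \<noteq> 0" using pp k by (auto simp: phi_def)
    thus ?thesis using H by blast
  qed
  have bdd: "bdd_below {rayleigh g rho Gam p0 p1 lam phi psi | phi psi.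
            H10_pair p0 phi psi \<and> (\<exists>p\<in>{p0..0}. phi p \<noteq> 0)}"
    using K by (auto intro!: bdd_belowI[of _ K])
  have "nu g rho Gam p0 p1 lam \<le> rayleigh g rho Gam p0 p1 lam phi psi"
    unfolding nu_def by (rule cInf_lower[OF mem bdd])
  thus ?thesis using Rl lam by auto
qed

end
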